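(* Let $k,c$ be integers with $1<c<k$. Then $N(ck+c-k,k)=\gcd(c,k)$.
   Context: For $n>k\ge1$, $N(n,k)$ is the nullity of the $n\times n$ skew-symmetric Toeplitz matrix $A(n,k)$ whose first $k$ superdiagonals have all entries $1$ and whose remaining superdiagonals have all entries $0$. *)

theory Defs
  imports "Jordan_Normal_Form.Matrix_Kernel"
begin

definition toepA :: "nat \<Rightarrow> nat \<Rightarrow> real mat" where
  "toepA n k = mat n n (\<lambda>(i,j).
      if i < j \<and> j - i \<le> k then 1
      else if j < i \<and> i - j \<le> k then -1
      else 0)"

definition nullityN :: "nat \<Rightarrow> nat \<Rightarrow> nat" where
  "nullityN n k = kernel_dim (toepA n k)"

end

theory Submission
  imports Defs
begin


definition Rw :: "nat \<Rightarrow> (nat \<Rightarrow> real) \<Rightarrow> nat \<Rightarrow> real" where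
  "Rw k f i = (\<Sum>j\<in>{Suc i..<Suc i + k}. f j) - (\<Sum>j\<in>{i - k..<i}. f j)"

definition yv :: "nat \<Rightarrow> (nat \<Rightarrow> real) \<Rightarrow> nat \<Rightarrow> real" where
  "yv k f m = f m - (if Suc k \<le> m then f (m - Suc k) else 0)"

definition Sy :: "nat \<Rightarrow> (nat \<Rightarrow> real) \<Rightarrow> nat \<Rightarrow> real" where
  "Sy k y m = (\<Sum>t\<le>m div Suc k. y (m - t * Suc k))"

lemma Rw_step: "Rw k f (Suc i) - Rw k f i = yv k f (i + Suc k) - yv k f (Suc i)"
proof -
  have r: "(\<Sum>j\<in>{Suc (Suc i)..<Suc (Suc i) + k}. f j) - (\<Sum>j\<in>{Suc i..<Suc i + k}. f j)
      = f (i + Suc k) - f (Suc i)"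
  proof (cases k)
    case 0 then show ?thesis by simp
  next
    case (Suc k')
    have "(\<Sum>j\<in>{Suc i..<Suc i + k}. f j) = f (Suc i) + (\<Sum>j\<in>{Suc (Suc i)..<Suc i + k}. f j)"
      by (rule sum.atLeast_Suc_lessThan) (simp add: Suc)
    moreover have "(\<Sum>j\<in>{Suc (Suc i)..<Suc (Suc i) + k}. f j) = (\<Sum>j\<in>{Suc (Suc i)..<Suc i + k}. f j) + f (i + Suc k)"
      using Suc by simp
    ultimately show ?thesis by simp
  qed
  have l: "(\<Sum>j\<in>{Suc i - k..<Suc i}. f j) - (\<Sum>j\<in>{i - k..<i}. f j)
      = f i - (if k \<le> i then f (i - k) else 0)"
  proof (cases "k \<le> i")
    case True
    then have "Suc i - k = Suc (i - k)" by simp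
    have "(\<Sum>j\<in>{i - k..<Suc i}. f j) = f (i - k) + (\<Sum>j\<in>{Suc (i - k)..<Suc i}. f j)"
      by (rule sum.atLeast_Suc_lessThan) simp
    then have "(\<Sum>j\<in>{Suc i - k..<Suc i}. f j) = (\<Sum>j\<in>{i - k..<Suc i}. f j) - f (i - k)"
      using \<open>Suc i - k = Suc (i - k)\<close> by simp
    also have "\<dots> = (\<Sum>j\<in>{i - k..<i}. f j) + f i - f (i - k)" by (subst sum.atLeastLessThan_Suc) auto
    finally show ?thesis using True by simp
  next
    case False
    then show ?thesis by simp
  qed
  have y1: "yv k f (i + Suc k) = f (i + Suc k) - f i" unfolding yv_def by simp
  have y2: "yv k f (Suc i) = f (Suc i) - (if k \<le> i then f (i - k) else 0)" unfolding yv_def by auto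
  show ?thesis unfolding Rw_def using r l y1 y2 by simp
qed

lemma Sy_rec: "Sy k y m = y m + (if Suc k \<le> m then Sy k y (m - Suc k) else 0)"
proof (cases "Suc k \<le> m")
  case False then show ?thesis unfolding Sy_def by simp
next
  case True
  define q where "q = (m - Suc k) div Suc k"
  have "m = (m - Suc k) + Suc k" using True by simp
  then have mq: "m div Suc k = Suc q" unfolding q_def
    by (metis div_add_self2 nat.distinct(1) Suc_eq_plus1)
  have "Sy k y m = y m + (\<Sum>t\<le>q. y (m - Suc t * Suc k))"
    unfolding Sy_def mq sum.atMost_Suc_shift by simp
  also have "(\<Sum>t\<le>q. y (m - Suc t * Suc k)) = Sy k y (m - Suc k)"
    unfolding Sy_def q_def[symmetric] by (intro sum.cong) (auto simp: diff_diff_left algebra_simps)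
  finally show ?thesis using True by simp
qed

lemma f_Sy: "f m = Sy k (yv k f) m"
proof (induction m rule: less_induct)
  case (less m)
  show ?case
  proof (cases "Suc k \<le> m")
    case True
    then have "Sy k (yv k f) m = yv k f m + f (m - Suc k)"
      using Sy_rec[of k "yv k f" m] less[of "m - Suc k"] by simp
    then show ?thesis unfolding yv_def using True by simp
  next
    case False
    then show ?thesis using Sy_rec[of k "yv k f" m] unfolding yv_def by simp
  qed
qed

lemma per_add: fixes h :: "nat \<Rightarrow> real" and p q :: nat
  assumes "\<And>r. h (r + p) = h r" shows "h (r + p * q) = h r"
proof (induction q)
  case (Suc q) then show ?case using assms[of "r + p*q"] by (simp add: algebra_simps)
qed simp

lemma per_shift_sum: fixes h :: "nat \<Rightarrow> real" and p s :: nat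
  assumes "\<And>r. h (r + p) = h r" shows "(\<Sum>t<p. h (s + t)) = (\<Sum>t<p. h t)"
proof (induction s)
  case (Suc s)
  have "(\<Sum>t<Suc p. h (s + t)) = h s + (\<Sum>t<p. h (Suc s + t))"
    by (subst sum.lessThan_Suc_shift) simp
  moreover have "(\<Sum>t<Suc p. h (s + t)) = (\<Sum>t<p. h (s + t)) + h s"
    using assms[of s] by (simp add: add.commute)
  ultimately show ?case using Suc by simp
qed simp

lemma per_sum_mult: fixes h :: "nat \<Rightarrow> real" and p q s :: nat
  assumes "\<And>r. h (r + p) = h r"
  shows "(\<Sum>t<q * p. h (s + t)) = real q * (\<Sum>t<p. h t)"
proof (induction q)
  case (Suc q)
  have "(\<Sum>t<Suc q * p. h (s + t)) = (\<Sum>t<q * p. h (s + t)) + (\<Sum>t<p. h (s + q * p + t))"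
  proof -
    have "(\<Sum>t<Suc q * p. h (s + t)) = (\<Sum>t\<in>{0..<q*p}. h (s + t)) + (\<Sum>t\<in>{q*p..<q*p+p}. h (s + t))"
      by (simp add: sum.atLeastLessThan_concat lessThan_atLeast0 add.commute[of p])
    also have "(\<Sum>t\<in>{q*p..<q*p+p}. h (s + t)) = (\<Sum>t\<in>{0..<p}. h (s + (t + q*p)))"
      using sum.shift_bounds_nat_ivl[of "\<lambda>t. h (s + t)" 0 "q*p" p] by (simp add: add.commute)
    finally show ?thesis by (simp add: lessThan_atLeast0 algebra_simps)
  qed
  then show ?case using Suc per_shift_sum[of h p "s + q*p", OF assms] by (simp add: algebra_simps)
qed simp

lemma n_form: assumes "1 < c" shows "c * k + c - k = (c - 1) * Suc k + 1"
proof -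
  obtain c' where "c = Suc c'" using assms by (cases c) auto
  then show ?thesis by (simp add: algebra_simps)
qed

lemma per_gcd: fixes h :: "nat \<Rightarrow> real"
  assumes hc: "\<And>r. h (r + c) = h r" and hk: "\<And>r. h (r + k) = h r" and c0: "c \<noteq> 0"
  shows "h (r + gcd c k) = h r"
proof -
  obtain x y where xy: "c * x = k * y + gcd c k" using bezout_nat[OF c0] by blast
  have "h (r + gcd c k) = h (r + gcd c k + k * y)" using per_add[of h k, OF hk] by simp
  also have "\<dots> = h (r + c * x)" using xy by (simp add: algebra_simps)
  also have "\<dots> = h r" using per_add[of h c, OF hc] by simp
  finally show ?thesis .
qed

lemma window_sum:
  assumes c1: "1 < c" and s: "s < k"
  shows "Sy k y ((c - 1) * Suc k + 1 + s) = (\<Sum>t<c. y (t * Suc k + 1 + s))"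
proof -
  define c' where "c' = c - 1"
  have cc: "c = Suc c'" using c1 unfolding c'_def by simp
  have d: "((c - 1) * Suc k + 1 + s) div Suc k = c'"
  proof -
    have e: "((c - 1) * Suc k + 1 + s) = (1 + s) + c' * Suc k" unfolding c'_def by simp
    have "(1 + s) div Suc k = 0" using s by (intro div_less) simp
    then show ?thesis using div_mult_self1[of "Suc k" "1 + s" c'] e by (simp add: ac_simps)
  qed
  have "Sy k y ((c - 1) * Suc k + 1 + s) = (\<Sum>t\<le>c'. y (c' * Suc k + 1 + s - t * Suc k))"
    unfolding Sy_def d c'_def by simp
  also have "\<dots> = (\<Sum>t<c. y (c' * Suc k + 1 + s - t * Suc k))"
    using cc lessThan_Suc_atMost by simp
  also have "\<dots> = (\<Sum>t<c. y (c' * Suc k + 1 + s - (c - Suc t) * Suc k))"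
    by (rule sum.nat_diff_reindex[symmetric])
  also have "\<dots> = (\<Sum>t<c. y (t * Suc k + 1 + s))"
  proof (intro sum.cong refl)
    fix t assume "t \<in> {..<c}"
    then have tc: "t \<le> c'" using cc by simp
    then have "c' * Suc k = (c' - t) * Suc k + t * Suc k"
      by (metis add.commute diff_mult_distrib le_add_diff_inverse mult_le_mono1)
    moreover have "c - Suc t = c' - t" using cc by simp
    moreover have "\<And>a b::nat. a + b + 1 + s - a = b + 1 + s" by simp
    ultimately show "y (c' * Suc k + 1 + s - (c - Suc t) * Suc k) = y (t * Suc k + 1 + s)"
      by metis
  qed
  finally show ?thesis .
qed


lemma U_core:
  fixes f :: "nat \<Rightarrow> real"
  assumes c1: "1 < c" and ck: "c < k" and nn: "n = (c - 1) * Suc k + 1"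
    and zero: "\<forall>j\<ge>n. f j = 0" and R: "\<forall>i<n. Rw k f i = 0"
    and f0: "\<forall>p<gcd c k. f p = 0"
  shows "f m = 0"
proof -
  define y where "y = yv k f"
  define A where "A r = y (r mod k + 1)" for r
  have per: "y (m + k) = y m" if "1 \<le> m" "m + 1 \<le> n" for m
  proof -
    have "Rw k f (Suc (m - 1)) - Rw k f (m - 1) = yv k f (m - 1 + Suc k) - yv k f (Suc (m - 1))"
      by (rule Rw_step)
    moreover have "Rw k f (Suc (m - 1)) = 0" "Rw k f (m - 1) = 0" using R that by auto
    moreover have "m - 1 + Suc k = m + k" "Suc (m - 1) = m" using that by auto
    ultimately show ?thesis unfolding y_def by simp
  qed
  have Ak: "A (r + k) = A r" for r unfolding A_def by simp
  have hA: "y m = A (m - 1)" if "1 \<le> m" "m \<le> n + k - 1" for m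
    using that
  proof (induction m rule: less_induct)
    case (less m)
    show ?case
    proof (cases "m \<le> k")
      case True
      then have "(m - 1) mod k + 1 = m" using less.prems by simp
      then show ?thesis unfolding A_def by simp
    next
      case False
      then have "y m = y ((m - k) + k)" by simp
      also have "\<dots> = y (m - k)" using per[of "m - k"] False less.prems by simp
      also have "\<dots> = A (m - k - 1)" using less.IH[of "m - k"] False less.prems ck by simp
      also have "\<dots> = A (m - k - 1 + k)" by (rule Ak[symmetric])
      also have "m - k - 1 + k = m - 1" using False by simp
      finally show ?thesis .
    qed
  qed
  have W: "(\<Sum>t<c. A (s + t)) = 0" if s: "s < k" for s
  proof -
    have "0 = f ((c - 1) * Suc k + 1 + s)" using zero nn by simp
    also have "\<dots> = Sy k y ((c - 1) * Suc k + 1 + s)" unfolding y_def by (rule f_Sy)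
    also have "\<dots> = (\<Sum>t<c. y (t * Suc k + 1 + s))" by (rule window_sum[OF c1 s])
    also have "\<dots> = (\<Sum>t<c. A (s + t))"
    proof (intro sum.cong refl)
      fix t assume t: "t \<in> {..<c}"
      then have "t * Suc k \<le> (c - 1) * Suc k" by (intro mult_le_mono1) simp
      then have "y (t * Suc k + 1 + s) = A (t * Suc k + s)"
        using hA[of "t * Suc k + 1 + s"] s nn by simp
      also have "\<dots> = A (s + t)"
      proof -
        have "t * Suc k + s = (s + t) + t * k" by (simp add: algebra_simps)
        then have "(t * Suc k + s) mod k = (s + t) mod k" by (metis mod_mult_self1)
        then show ?thesis unfolding A_def by simp
      qed
      finally show "y (t * Suc k + 1 + s) = A (s + t)" .
    qed
    finally show ?thesis by simp
  qed
  have Wall: "(\<Sum>t<c. A (s + t)) = 0" for s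
  proof -
    have "A (s + t) = A (s mod k + t)" for t unfolding A_def by (simp add: mod_add_left_eq)
    then have "(\<Sum>t<c. A (s + t)) = (\<Sum>t<c. A (s mod k + t))" by simp
    also have "\<dots> = 0" using W[of "s mod k"] ck by simp
    finally show ?thesis .
  qed
  have Ac: "A (s + c) = A s" for s
  proof -
    have "(\<Sum>t<Suc c. A (s + t)) = A s + (\<Sum>t<c. A (Suc s + t))"
      by (subst sum.lessThan_Suc_shift) simp
    moreover have "(\<Sum>t<Suc c. A (s + t)) = (\<Sum>t<c. A (s + t)) + A (s + c)" by simp
    ultimately show ?thesis using Wall[of s] Wall[of "Suc s"] by simp
  qed
  define g where "g = gcd c k"
  have g0: "0 < g" unfolding g_def using c1 by simp
  have gc: "g dvd c" unfolding g_def by simp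
  have gle: "g \<le> c" using gc c1 by (simp add: dvd_imp_le)
  have Ag: "A (r + g) = A r" for r unfolding g_def using per_gcd[of A c k r] Ac Ak c1 by simp
  have Asmall: "A r = 0" if "r < g - 1" for r
  proof -
    have "y (r + 1) = A r" using hA[of "r + 1"] that gle ck nn by simp
    moreover have "\<not> Suc k \<le> r + 1" using that gle ck by simp
    then have "y (r + 1) = f (r + 1)" unfolding y_def yv_def by simp
    moreover have "f (r + 1) = 0" using f0 that g_def by simp
    ultimately show ?thesis by simp
  qed
  have "(\<Sum>t<(c div g) * g. A (0 + t)) = real (c div g) * (\<Sum>t<g. A t)"
    by (rule per_sum_mult) (rule Ag)
  moreover have "(c div g) * g = c" using gc by simp
  ultimately have "real (c div g) * (\<Sum>t<g. A t) = 0" using Wall[of 0] by simp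
  moreover have "c div g \<noteq> 0" using gle g0 by (simp add: div_eq_0_iff)
  ultimately have sg: "(\<Sum>t<g. A t) = 0" by simp
  have "(\<Sum>t<g. A t) = (\<Sum>t<g - 1. A t) + A (g - 1)"
    using g0 by (metis Suc_pred' sum.lessThan_Suc)
  moreover have "(\<Sum>t<g - 1. A t) = 0" using Asmall by simp
  ultimately have Alast: "A (g - 1) = 0" using sg by simp
  have Az: "A r = 0" for r
  proof -
    have "A r = A (r mod g + g * (r div g))" by simp
    also have "\<dots> = A (r mod g)" by (rule per_add[of A g, OF Ag])
    also have "\<dots> = 0"
    proof -
      have "r mod g < g" using g0 by simp
      then show ?thesis using Asmall[of "r mod g"] Alast
      proof (cases "r mod g < g - 1")
        case False
        then have "r mod g = g - 1" using \<open>r mod g < g\<close> by linarith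
        then show ?thesis using Alast by simp
      qed (rule Asmall)
    qed
    finally show ?thesis .
  qed
  have y0: "y 0 = 0" unfolding y_def yv_def using f0 g0 g_def by simp
  have yz: "y m = 0" if "m < n" for m
    using that hA[of m] Az y0 by (cases "m = 0") auto
  show ?thesis
  proof (cases "m < n")
    case True
    have "f m = Sy k y m" unfolding y_def by (rule f_Sy)
    also have "\<dots> = 0" unfolding Sy_def using True yz by (intro sum.neutral) auto
    finally show ?thesis .
  next
    case False then show ?thesis using zero by simp
  qed
qed



lemma Sy_small: "m < Suc k \<Longrightarrow> Sy k y m = y m"
  using Sy_rec[of k y m] by simp

lemma E_core:
  fixes a :: "nat \<Rightarrow> real" and b :: real and c k n :: nat
  assumes c1: "1 < c" and ck: "c < k" and nn: "n = (c - 1) * Suc k + 1"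
    and sa: "(\<Sum>r<gcd c k. a r) = 0"
  shows "\<exists>f. (\<forall>j\<ge>n. f j = 0) \<and> (\<forall>i<n. Rw k f i = 0) \<and> f 0 = b
     \<and> (\<forall>p. 1 \<le> p \<longrightarrow> p < gcd c k \<longrightarrow> f p = a (p - 1))"
proof -
  define A where "A = (\<lambda>r. a (r mod gcd c k))"
  define y where "y = (\<lambda>m. if m = 0 then b else A (m - 1))"
  define f where "f = (\<lambda>m. if m < n then Sy k y m else 0)"
  define g where "g = gcd c k"
  have g0: "0 < g" unfolding g_def using c1 by simp
  have gc: "g dvd c" and gk: "g dvd k" unfolding g_def by simp_all
  have gle: "g \<le> c" using gc c1 by (simp add: dvd_imp_le)
  have "1 * Suc k \<le> (c - 1) * Suc k" using c1 by (intro mult_le_mono1) simp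
  then have nK: "Suc k < n" using nn by simp
  have Ag: "A (r + g) = A r" for r unfolding A_def g_def by simp
  have Ak: "A (r + k) = A r" for r
  proof -
    have "k = g * (k div g)" using gk by simp
    then show ?thesis using per_add[of A g, OF Ag, of r "k div g"] by metis
  qed
  have Sumg: "(\<Sum>t<g. A t) = 0" using sa unfolding A_def g_def by simp
  have Wc: "(\<Sum>t<c. A (s + t)) = 0" for s
  proof -
    have "(\<Sum>t<(c div g) * g. A (s + t)) = real (c div g) * (\<Sum>t<g. A t)"
      by (rule per_sum_mult) (rule Ag)
    moreover have "(c div g) * g = c" using gc by simp
    ultimately show ?thesis using Sumg by simp
  qed
  have Wk: "(\<Sum>t<k. A (s + t)) = 0" for s
  proof -
    have "(\<Sum>t<(k div g) * g. A (s + t)) = real (k div g) * (\<Sum>t<g. A t)"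
      by (rule per_sum_mult) (rule Ag)
    moreover have "(k div g) * g = k" using gk by simp
    ultimately show ?thesis using Sumg by simp
  qed
  have Xz: "Sy k y m = 0" if "n \<le> m" "m < n + k" for m
  proof -
    define s where "s = m - n"
    have s: "s < k" and ms: "m = (c - 1) * Suc k + 1 + s" using that nn unfolding s_def by auto
    have "Sy k y m = (\<Sum>t<c. y (t * Suc k + 1 + s))" unfolding ms by (rule window_sum[OF c1 s])
    also have "\<dots> = (\<Sum>t<c. A (s + t))"
    proof (intro sum.cong refl)
      fix t
      have "y (t * Suc k + 1 + s) = A (t * Suc k + s)" unfolding y_def by simp
      also have "t * Suc k + s = (s + t) + k * t" by (simp add: algebra_simps)
      also have "A \<dots> = A (s + t)" by (rule per_add[of A k, OF Ak])
      finally show "y (t * Suc k + 1 + s) = A (s + t)" .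
    qed
    also have "\<dots> = 0" by (rule Wc)
    finally show ?thesis .
  qed
  have yeq: "yv k f m = y m" if "m < n + k" for m
  proof (cases "m < n")
    case True
    show ?thesis
    proof (cases "Suc k \<le> m")
      case True
      then have "yv k f m = Sy k y m - Sy k y (m - Suc k)" 
        unfolding yv_def f_def using \<open>m < n\<close> by auto
      then show ?thesis using Sy_rec[of k y m] True by simp
    next
      case False
      then show ?thesis unfolding yv_def f_def using \<open>m < n\<close> Sy_small[of m k y] by simp
    qed
  next
    case False
    then have K: "Suc k \<le> m" using nK by simp
    have "m - Suc k < n" using that nK by arith
    then have "yv k f m = - Sy k y (m - Suc k)" unfolding yv_def f_def using False K by simp
    also have "\<dots> = y m" using Sy_rec[of k y m] K Xz[of m] False that by simp
    finally show ?thesis .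
  qed
  have R: "Rw k f i = 0" if "i < n" for i
    using that
  proof (induction i)
    case 0
    have "Rw k f 0 = (\<Sum>j\<in>{Suc 0..<Suc k}. f j)" unfolding Rw_def by simp
    also have "\<dots> = (\<Sum>j\<in>{Suc 0..<Suc k}. A (j - 1))"
    proof (intro sum.cong refl)
      fix j assume j: "j \<in> {Suc 0..<Suc k}"
      then have "j < n" using nK by simp
      then show "f j = A (j - 1)" unfolding f_def using Sy_small[of j k y] j unfolding y_def by simp
    qed
    also have "\<dots> = (\<Sum>j\<in>{0..<k}. A j)" by (subst sum.shift_bounds_Suc_ivl) simp
    also have "\<dots> = 0" using Wk[of 0] by (simp add: lessThan_atLeast0)
    finally show ?case .
  next
    case (Suc i)
    have "Rw k f (Suc i) - Rw k f i = yv k f (i + Suc k) - yv k f (Suc i)" by (rule Rw_step)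
    moreover have "Rw k f i = 0" using Suc by simp
    moreover have "yv k f (i + Suc k) = y (i + Suc k)" using Suc.prems by (intro yeq) simp
    moreover have "yv k f (Suc i) = y (Suc i)" using Suc.prems by (intro yeq) simp
    moreover have "y (i + Suc k) = A (i + k)" "y (Suc i) = A i" unfolding y_def by simp_all
    ultimately show ?case using Ak[of i] by simp
  qed
  have f0: "f 0 = b" unfolding f_def using nK Sy_small[of 0 k y] unfolding y_def by simp
  have fp: "f p = a (p - 1)" if "1 \<le> p" "p < g" for p
  proof -
    have "p < Suc k" "p < n" using that gle ck nK by auto
    then have "f p = A (p - 1)" unfolding f_def using Sy_small[of p k y] that unfolding y_def by simp
    also have "\<dots> = a (p - 1)" unfolding A_def g_def[symmetric] using that by simp
    finally show ?thesis .
  qed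
  have fz: "\<forall>j\<ge>n. f j = 0" unfolding f_def by simp
  have "(\<forall>j\<ge>n. f j = 0) \<and> (\<forall>i<n. Rw k f i = 0) \<and> f 0 = b
     \<and> (\<forall>p. 1 \<le> p \<longrightarrow> p < gcd c k \<longrightarrow> f p = a (p - 1))"
    using R f0 fp fz unfolding g_def by blast
  then show ?thesis by (rule exI[where x = f])
qed


lemma toep_row:
  fixes v :: "real vec"
  assumes v: "v \<in> carrier_vec n" and i: "i < n"
  shows "(toepA n k *\<^sub>v v) $ i = Rw k (\<lambda>j. if j < n then v $ j else 0) i"
proof -
  define F where "F = (\<lambda>j. if j < n then v $ j else 0)"
  define e where "e = (\<lambda>j. if i < j \<and> j - i \<le> k then 1 else if j < i \<and> i - j \<le> k then -1 else (0::real))"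
  define N where "N = n + i + k + 1"
  have "(toepA n k *\<^sub>v v) $ i = (\<Sum>j\<in>{0..<n}. e j * v $ j)"
    unfolding toepA_def e_def using v i by (simp add: scalar_prod_def)
  also have "\<dots> = (\<Sum>j\<in>{0..<n}. e j * F j)" unfolding F_def by simp
  also have "\<dots> = (\<Sum>j\<in>{0..<N}. e j * F j)"
    by (rule sum.mono_neutral_left) (auto simp: F_def N_def)
  also have "\<dots> = (\<Sum>j\<in>{0..<N}. (if j \<in> {Suc i..<Suc i + k} then F j else 0)
                  - (if j \<in> {i - k..<i} then F j else 0))"
    by (intro sum.cong refl) (auto simp: e_def)
  also have "\<dots> = (\<Sum>j\<in>{0..<N} \<inter> {Suc i..<Suc i + k}. F j) - (\<Sum>j\<in>{0..<N} \<inter> {i - k..<i}. F j)"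
    by (simp only: sum_subtractf sum.inter_restrict[OF finite_atLeastLessThan])
  also have "{0..<N} \<inter> {Suc i..<Suc i + k} = {Suc i..<Suc i + k}" unfolding N_def by auto
  also have "{0..<N} \<inter> {i - k..<i} = {i - k..<i}" unfolding N_def by auto
  finally show ?thesis unfolding Rw_def F_def .
qed


lemma E_basis:
  fixes c k n :: nat
  assumes c1: "1 < c" and ck: "c < k" and nn: "n = (c - 1) * Suc k + 1" and j: "j < gcd c k"
  shows "\<exists>f::nat \<Rightarrow> real. (\<forall>m\<ge>n. f m = 0) \<and> (\<forall>i<n. Rw k f i = 0)
           \<and> (\<forall>p<gcd c k. f p = (if p = j then 1 else 0))"
proof (cases "j = 0")
  case True
  define a :: "nat \<Rightarrow> real" where "a = (\<lambda>_. 0)"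
  have "(\<Sum>r<gcd c k. a r) = 0" unfolding a_def by simp
  from E_core[OF c1 ck nn this, of 1] obtain f :: "nat \<Rightarrow> real" where
    f: "(\<forall>j\<ge>n. f j = 0) \<and> (\<forall>i<n. Rw k f i = 0) \<and> f 0 = 1
     \<and> (\<forall>p. 1 \<le> p \<longrightarrow> p < gcd c k \<longrightarrow> f p = a (p - 1))" by blast
  have "\<forall>p<gcd c k. f p = (if p = j then 1 else 0)"
  proof (intro allI impI)
    fix p assume "p < gcd c k"
    then show "f p = (if p = j then 1 else 0)" using f True unfolding a_def
      by (cases "p = 0") auto
  qed
  then show ?thesis using f by blast
next
  case False
  define g where "g = gcd c k"
  define a :: "nat \<Rightarrow> real" where "a = (\<lambda>r. (if r = j - 1 then 1 else 0) - (if r = g - 1 then 1 else 0))"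
  have jg: "j - 1 < g" "g - 1 < g" using j False unfolding g_def by auto
  have "(\<Sum>r<g. a r) = (\<Sum>r<g. (if r = j - 1 then 1 else 0)) - (\<Sum>r<g. (if r = g - 1 then 1 else 0))"
    unfolding a_def by (rule sum_subtractf)
  also have "\<dots> = 0" using jg by simp
  finally have "(\<Sum>r<gcd c k. a r) = 0" unfolding g_def .
  from E_core[OF c1 ck nn this, of 0] obtain f :: "nat \<Rightarrow> real" where
    f: "(\<forall>j\<ge>n. f j = 0) \<and> (\<forall>i<n. Rw k f i = 0) \<and> f 0 = 0
     \<and> (\<forall>p. 1 \<le> p \<longrightarrow> p < gcd c k \<longrightarrow> f p = a (p - 1))" by blast
  have "\<forall>p<gcd c k. f p = (if p = j then 1 else 0)"
  proof (intro allI impI)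
    fix p assume p: "p < gcd c k"
    show "f p = (if p = j then 1 else 0)"
    proof (cases "p = 0")
      case True then show ?thesis using f False by simp
    next
      case False
      then have "f p = a (p - 1)" using f p by simp
      also have "\<dots> = (if p = j then 1 else 0)"
        unfolding a_def using False \<open>j \<noteq> 0\<close> p g_def by auto
      finally show ?thesis .
    qed
  qed
  then show ?thesis using f by blast
qed

lemma Rw_diff: "Rw k (\<lambda>m. f m - h m) i = Rw k f i - Rw k h i"
  unfolding Rw_def by (simp add: sum_subtractf)

lemma kernel_Rw:
  assumes x: "x \<in> mat_kernel (toepA n k)" and i: "i < n"
  shows "Rw k (\<lambda>j. if j < n then x $ j else 0) i = 0"
proof -
  have A: "toepA n k \<in> carrier_mat n n" unfolding toepA_def by simp
  from mat_kernelD[OF A x] have xc: "x \<in> carrier_vec n" and z: "toepA n k *\<^sub>v x = 0\<^sub>v n" by auto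
  have "Rw k (\<lambda>j. if j < n then x $ j else 0) i = (toepA n k *\<^sub>v x) $ i"
    using toep_row[OF xc i] by simp
  also have "\<dots> = 0" using z i by simp
  finally show ?thesis .
qed

lemma kernel_unique:
  fixes c k n :: nat
  assumes c1: "1 < c" and ck: "c < k" and nn: "n = (c - 1) * Suc k + 1"
    and x: "x \<in> mat_kernel (toepA n k)" and w: "w \<in> mat_kernel (toepA n k)"
    and agree: "\<forall>p<gcd c k. x $ p = w $ p"
  shows "x = w"
proof -
  have A: "toepA n k \<in> carrier_mat n n" unfolding toepA_def by simp
  have xc: "x \<in> carrier_vec n" and wc: "w \<in> carrier_vec n"
    using mat_kernelD[OF A x] mat_kernelD[OF A w] by auto
  define h where "h = (\<lambda>j. (if j < n then x $ j else 0) - (if j < n then w $ j else (0::real)))"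
  have hz: "\<forall>j\<ge>n. h j = 0" unfolding h_def by simp
  have hR: "\<forall>i<n. Rw k h i = 0"
    unfolding h_def Rw_diff using kernel_Rw[OF x] kernel_Rw[OF w] by simp
  have g_le: "gcd c k < n"
  proof -
    have g1: "gcd c k \<le> c" using c1 by (intro dvd_imp_le) simp_all
    have g2: "Suc k \<le> (c - 1) * Suc k" using c1 mult_le_mono1[of 1 "c - 1" "Suc k"] by simp
    have g3: "(c - 1) * Suc k < n" using nn by simp
    from g1 g2 g3 ck show ?thesis by linarith
  qed
  have h0: "\<forall>p<gcd c k. h p = 0" unfolding h_def using agree g_le by simp
  have "\<And>m. h m = 0" using U_core[OF c1 ck nn hz hR h0] .
  then have "\<And>m. m < n \<Longrightarrow> x $ m = w $ m" unfolding h_def by (metis eq_iff_diff_eq_0)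
  then show ?thesis using xc wc by (intro eq_vecI) auto
qed


theorem theorem8p8:
  fixes c k :: nat
  assumes "1 < c" and "c < k"
  shows "nullityN (c * k + c - k) k = gcd c k"
proof -
  note c1 = assms(1) and ck = assms(2)
  define n where "n = c * k + c - k"
  have nn: "n = (c - 1) * Suc k + 1" unfolding n_def by (rule n_form[OF c1])
  define g where "g = gcd c k"
  define M where "M = toepA n k"
  have M: "M \<in> carrier_mat n n" unfolding M_def toepA_def by simp
  interpret K: kernel n n M by unfold_locales (rule M)
  have gn: "g < n"
  proof -
    have g1: "gcd c k \<le> c" using c1 by (intro dvd_imp_le) simp_all
    have g2: "Suc k \<le> (c - 1) * Suc k" using c1 mult_le_mono1[of 1 "c - 1" "Suc k"] by simp
    have g3: "(c - 1) * Suc k < n" using nn by simp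
    from g1 g2 g3 ck show ?thesis unfolding g_def by linarith
  qed
  have ex: "\<forall>j. \<exists>f::nat \<Rightarrow> real. j < g \<longrightarrow> ((\<forall>m\<ge>n. f m = 0) \<and> (\<forall>i<n. Rw k f i = 0)
           \<and> (\<forall>p<g. f p = (if p = j then 1 else 0)))"
    using E_basis[OF c1 ck nn] unfolding g_def by blast
  from choice[OF ex] obtain FF :: "nat \<Rightarrow> nat \<Rightarrow> real" where
    FF: "\<And>j. j < g \<Longrightarrow> (\<forall>m\<ge>n. FF j m = 0) \<and> (\<forall>i<n. Rw k (FF j) i = 0)
           \<and> (\<forall>p<g. FF j p = (if p = j then 1 else 0))" by blast
  define V where "V j = vec n (FF j)" for j
  have Vc: "V j \<in> carrier_vec n" for j unfolding V_def by simp
  have Vk: "V j \<in> mat_kernel M" if j: "j < g" for j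
  proof (rule mat_kernelI[OF M Vc])
    have fe: "(\<lambda>m. if m < n then V j $ m else 0) = FF j"
      using FF[OF j] unfolding V_def by (auto simp: fun_eq_iff)
    show "M *\<^sub>v V j = 0\<^sub>v n"
    proof (rule eq_vecI)
      fix i assume i: "i < dim_vec (0\<^sub>v n :: real vec)"
      then have "(M *\<^sub>v V j) $ i = Rw k (FF j) i" unfolding M_def using toep_row[OF Vc, of i k] fe by simp
      also have "\<dots> = 0" using FF[OF j] i by simp
      finally show "(M *\<^sub>v V j) $ i = 0\<^sub>v n $ i" using i by simp
    qed (use M in simp)
  qed
  have Vd: "V j $ p = (if p = j then 1 else 0)" if "j < g" "p < g" for j p
    using FF[OF that(1)] that gn unfolding V_def by simp
  have inj: "inj_on V {..<g}"
  proof (rule inj_onI)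
    fix i j assume "i \<in> {..<g}" "j \<in> {..<g}" "V i = V j"
    then show "i = j" using Vd[of i i] Vd[of j i] by (auto split: if_splits)
  qed
  define B where "B = V ` {..<g}"
  have Bk: "B \<subseteq> mat_kernel M" unfolding B_def using Vk by auto
  have fin: "finite B" unfolding B_def by simp
  have card: "card B = g" unfolding B_def using inj by (simp add: card_image)
  have li: "K.lin_indpt B"
  proof
    assume "K.lin_dep B"
    then obtain U a v where U: "finite U" "U \<subseteq> B" and lc: "K.lincomb a U = 0\<^sub>v n"
      and vU: "v \<in> U" and av: "a v \<noteq> 0"
      unfolding K.Ker.lin_dep_def by auto
    from vU U obtain j where j: "j < g" "v = V j" unfolding B_def by auto
    have Uk: "U \<subseteq> mat_kernel M" using U Bk by auto
    have "K.lincomb a U $ j = (\<Sum>u\<in>U. a u * u $ j)"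
      by (rule K.lincomb_index) (use j gn Uk in auto)
    also have "\<dots> = (\<Sum>u\<in>U. if u = v then a u else 0)"
    proof (intro sum.cong refl)
      fix u assume "u \<in> U"
      then obtain j' where j': "j' < g" "u = V j'" using U unfolding B_def by auto
      have "u $ j = (if j = j' then 1 else 0)" using Vd[OF j'(1) j(1)] j' by simp
      moreover have "(u = v) = (j' = j)" using inj j j' unfolding inj_on_def by auto
      ultimately show "a u * u $ j = (if u = v then a u else 0)" by auto
    qed
    also have "\<dots> = a v" using U(1) vU by simp
    finally have "a v = 0" using lc j gn by simp
    then show False using av by simp
  qed
  have gen: "K.span B = mat_kernel M"
  proof
    show "K.span B \<subseteq> mat_kernel M" by (rule K.Ker.span_is_subset2[OF Bk])
    show "mat_kernel M \<subseteq> K.span B"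
    proof
      fix x assume x: "x \<in> mat_kernel M"
      define a where "a u = (\<Sum>p<g. x $ p * u $ p)" for u
      have L: "K.lincomb a B \<in> mat_kernel M" by (rule K.Ker.lincomb_closed) (use Bk in auto)
      have Lp: "K.lincomb a B $ p = x $ p" if p: "p < g" for p
      proof -
        have "K.lincomb a B $ p = (\<Sum>u\<in>B. a u * u $ p)"
          by (rule K.lincomb_index) (use p gn Bk in auto)
        also have "\<dots> = (\<Sum>j<g. a (V j) * V j $ p)"
          unfolding B_def by (rule sum.reindex[OF inj, unfolded comp_def])
        also have "\<dots> = (\<Sum>j<g. x $ j * (if p = j then 1 else 0))"
        proof (intro sum.cong refl)
          fix j assume j: "j \<in> {..<g}"
          have "a (V j) = (\<Sum>q<g. x $ q * (if q = j then 1 else 0))"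
            unfolding a_def using Vd[of j] j by simp
          also have "\<dots> = x $ j" using j by (simp add: if_distrib cong: if_cong)
          finally show "a (V j) * V j $ p = x $ j * (if p = j then 1 else 0)"
            using Vd[of j p] j p by simp
        qed
        also have "\<dots> = x $ p" using p by (simp add: if_distrib cong: if_cong)
        finally show ?thesis .
      qed
      have "x = K.lincomb a B"
        using kernel_unique[OF c1 ck nn, folded M_def, OF x L] Lp unfolding g_def by simp
      then show "x \<in> K.span B" unfolding K.Ker.span_def using fin by blast
    qed
  qed
  have basis: "K.basis B" unfolding K.Ker.basis_def using li gen Bk by simp
  have "K.dim = card B" by (rule K.Ker.dim_basis[OF fin basis])
  then have "kernel_dim M = g" using card by simp
  then show ?thesis unfolding nullityN_def M_def n_def g_def .
qed

end
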